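(* A pomset language $\mathcal U\subseteq\mathsf{Pom}^{\mathsf{sp}}$ is accepted by some finite pomset automaton (i.e., $\mathcal U=L_A(q)$ for some finite PA $A$ and state $q$ of $A$) if and only if $\mathcal U$ is context-free.
   Context: Fix a finite alphabet $\Sigma$. Pomsets are isomorphism classes of $\Sigma$-labelled posets; $1$ is the empty pomset, $a\in\Sigma$ the one-point pomset. $U\cdot V$ is the disjoint union with every element of $U$ below every element of $V$; $U\parallel V$ the disjoint union with no added order. $\mathsf{Pom}^{\mathsf{sp}}$ is the smallest set containing $1$ and all $a$ closed under $\cdot,\parallel$. A PA is $A=\langle Q,\delta,\gamma,F\rangle$ with $F\subseteq Q$, $\delta:Q\times\Sigma\to Q$, $\gamma:Q^3\to Q$, containing states $\bot\notin F$, $\top\in F$ with $\delta(\bot,a)=\delta(\top,a)=\bot$ and $\gamma(\bot,r,s)=\gamma(\top,r,s)=\bot$; it is finite if $Q$ is finite. Traces $\to_A\subseteq Q\times\mathsf{Pom}^{\mathsf{sp}}\times Q$: smallest relation with $q\xrightarrow{1}_A q$; $q\xrightarrow{a}_A\delta(q,a)$; $q\xrightarrow{U}_A q''\xrightarrow{V}_A q'$ implies $q\xrightarrow{U\cdot V}_A q'$; $r\xrightarrow{U}_A r'\in F$, $s\xrightarrow{V}_A s'\in F$ imply $q\xrightarrow{U\parallel V}_A\gamma(q,r,s)$. $L_A(q)=\{U:\exists q'\in F.\ q\xrightarrow{U}_A q'\}$. A context-free pomset grammar is a triple $G=\langle\Gamma,S,R\rangle$ with $\Gamma$ a finite set of non-terminals,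 $S\in\Gamma$ the start symbol, and $R$ a finite set of production rules, each a pair of a non-terminal and a term built from symbols in $\Gamma\cup\Sigma\cup\{\epsilon\}$ using binary sequential products $\cdot$ and parallel products $\parallel$. Derivations rewrite occurrences of non-terminals by right-hand sides of rules as usual, starting from $S$; a derived term containing no non-terminals denotes a series-parallel pomset (interpreting $\epsilon$ as $1$, $a$ as the primitive pomset, and $\cdot,\parallel$ as pomset compositions). $[\![G]\!]$ is the set of pomsets so derived, and a pomset language is context-free if it equals $[\![G]\!]$ for some such $G$. *)

theory Defs
  imports Main
begin

text \<open>A labelled poset is represented by a carrier (a finite set of naturals),
  an order relation on it, and a labelling function (relevant only on the carrier).\<close>

type_synonym 'a lposet = "nat set \<times> (nat \<times> nat) set \<times> (nat \<Rightarrow> 'a)"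

definition lposet_wf :: "'a lposet \<Rightarrow> bool" where
  "lposet_wf P = (case P of (C, R, l) \<Rightarrow>
     finite C \<and> R \<subseteq> C \<times> C \<and> refl_on C R \<and> antisym R \<and> trans R)"

definition lposet_iso :: "'a lposet \<Rightarrow> 'a lposet \<Rightarrow> bool" where
  "lposet_iso P Q = (case P of (C1, R1, l1) \<Rightarrow> case Q of (C2, R2, l2) \<Rightarrow>
     (\<exists>f. bij_betw f C1 C2 \<and>
          (\<forall>x\<in>C1. \<forall>y\<in>C1. (x, y) \<in> R1 \<longleftrightarrow> (f x, f y) \<in> R2) \<and>
          (\<forall>x\<in>C1. l2 (f x) = l1 x)))"

typedef 'a pomset =
  "{K :: 'a lposet set. \<exists>P. lposet_wf P \<and> K = {Q. lposet_wf Q \<and> lposet_iso P Q}}"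
proof -
  have "lposet_wf ({}, {}, \<lambda>_. undefined)"
    by (simp add: lposet_wf_def refl_on_def antisym_def trans_def)
  then show ?thesis by blast
qed

definition pom_of :: "'a lposet \<Rightarrow> 'a pomset" where
  "pom_of P = Abs_pomset {Q. lposet_wf Q \<and> lposet_iso P Q}"

definition pom_rep :: "'a pomset \<Rightarrow> 'a lposet" where
  "pom_rep U = (SOME P. P \<in> Rep_pomset U)"

text \<open>Disjoint union: left part tagged by even numbers, right part by odd numbers.\<close>

definition lposet_seq :: "'a lposet \<Rightarrow> 'a lposet \<Rightarrow> 'a lposet" where
  "lposet_seq P Q = (case P of (C1, R1, l1) \<Rightarrow> case Q of (C2, R2, l2) \<Rightarrow>
     ((\<lambda>x. 2 * x) ` C1 \<union> (\<lambda>x. 2 * x + 1) ` C2,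
      (\<lambda>(x, y). (2 * x, 2 * y)) ` R1 \<union> (\<lambda>(x, y). (2 * x + 1, 2 * y + 1)) ` R2
        \<union> ((\<lambda>x. 2 * x) ` C1) \<times> ((\<lambda>x. 2 * x + 1) ` C2),
      (\<lambda>n. if even n then l1 (n div 2) else l2 (n div 2))))"

definition lposet_par :: "'a lposet \<Rightarrow> 'a lposet \<Rightarrow> 'a lposet" where
  "lposet_par P Q = (case P of (C1, R1, l1) \<Rightarrow> case Q of (C2, R2, l2) \<Rightarrow>
     ((\<lambda>x. 2 * x) ` C1 \<union> (\<lambda>x. 2 * x + 1) ` C2,
      (\<lambda>(x, y). (2 * x, 2 * y)) ` R1 \<union> (\<lambda>(x, y). (2 * x + 1, 2 * y + 1)) ` R2,
      (\<lambda>n. if even n then l1 (n div 2) else l2 (n div 2))))"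

definition pom_one :: "'a pomset" where
  "pom_one = pom_of ({}, {}, \<lambda>_. undefined)"

definition pom_prim :: "'a \<Rightarrow> 'a pomset" where
  "pom_prim a = pom_of ({0}, {(0, 0)}, \<lambda>_. a)"

definition pom_seq :: "'a pomset \<Rightarrow> 'a pomset \<Rightarrow> 'a pomset" where
  "pom_seq U V = pom_of (lposet_seq (pom_rep U) (pom_rep V))"

definition pom_par :: "'a pomset \<Rightarrow> 'a pomset \<Rightarrow> 'a pomset" where
  "pom_par U V = pom_of (lposet_par (pom_rep U) (pom_rep V))"

inductive_set sp_pomsets :: "'a pomset set" where
  sp_one: "pom_one \<in> sp_pomsets"
| sp_prim: "pom_prim a \<in> sp_pomsets"
| sp_seq: "U \<in> sp_pomsets \<Longrightarrow> V \<in> sp_pomsets \<Longrightarrow> pom_seq U V \<in> sp_pomsets"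
| sp_par: "U \<in> sp_pomsets \<Longrightarrow> V \<in> sp_pomsets \<Longrightarrow> pom_par U V \<in> sp_pomsets"

record 'a pa =
  pa_states :: "nat set"
  pa_delta  :: "nat \<Rightarrow> 'a \<Rightarrow> nat"
  pa_gamma  :: "nat \<Rightarrow> nat \<Rightarrow> nat \<Rightarrow> nat"
  pa_final  :: "nat set"
  pa_bot    :: nat
  pa_top    :: nat

definition is_pa :: "'a pa \<Rightarrow> bool" where
  "is_pa A \<longleftrightarrow>
     pa_final A \<subseteq> pa_states A \<and>
     (\<forall>q\<in>pa_states A. \<forall>a. pa_delta A q a \<in> pa_states A) \<and>
     (\<forall>q\<in>pa_states A. \<forall>r\<in>pa_states A. \<forall>s\<in>pa_states A. pa_gamma A q r s \<in> pa_states A) \<and>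
     pa_bot A \<in> pa_states A \<and> pa_top A \<in> pa_states A \<and>
     pa_bot A \<notin> pa_final A \<and> pa_top A \<in> pa_final A \<and>
     (\<forall>a. pa_delta A (pa_bot A) a = pa_bot A \<and> pa_delta A (pa_top A) a = pa_bot A) \<and>
     (\<forall>r\<in>pa_states A. \<forall>s\<in>pa_states A.
        pa_gamma A (pa_bot A) r s = pa_bot A \<and> pa_gamma A (pa_top A) r s = pa_bot A)"

definition finite_pa :: "'a pa \<Rightarrow> bool" where
  "finite_pa A \<longleftrightarrow> is_pa A \<and> finite (pa_states A)"

inductive pa_trace :: "'a pa \<Rightarrow> nat \<Rightarrow> 'a pomset \<Rightarrow> nat \<Rightarrow> bool" for A where
  tr_one: "q \<in> pa_states A \<Longrightarrow> pa_trace A q pom_one q"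
| tr_prim: "q \<in> pa_states A \<Longrightarrow> pa_trace A q (pom_prim a) (pa_delta A q a)"
| tr_seq: "pa_trace A q U q'' \<Longrightarrow> pa_trace A q'' V q' \<Longrightarrow> pa_trace A q (pom_seq U V) q'"
| tr_par: "q \<in> pa_states A \<Longrightarrow> pa_trace A r U r' \<Longrightarrow> r' \<in> pa_final A \<Longrightarrow>
           pa_trace A s V s' \<Longrightarrow> s' \<in> pa_final A \<Longrightarrow>
           pa_trace A q (pom_par U V) (pa_gamma A q r s)"

definition pa_lang :: "'a pa \<Rightarrow> nat \<Rightarrow> 'a pomset set" where
  "pa_lang A q = {U. \<exists>q'\<in>pa_final A. pa_trace A q U q'}"

datatype ('a, 'n) gterm =
    NT 'n
  | Term 'a
  | Eps
  | GSeq "('a, 'n) gterm" "('a, 'n) gterm"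
  | GPar "('a, 'n) gterm" "('a, 'n) gterm"

fun nts :: "('a, 'n) gterm \<Rightarrow> 'n set" where
  "nts (NT X) = {X}"
| "nts (Term a) = {}"
| "nts Eps = {}"
| "nts (GSeq s t) = nts s \<union> nts t"
| "nts (GPar s t) = nts s \<union> nts t"

fun gterm_sem :: "('a, 'n) gterm \<Rightarrow> 'a pomset" where
  "gterm_sem (NT X) = undefined"
| "gterm_sem (Term a) = pom_prim a"
| "gterm_sem Eps = pom_one"
| "gterm_sem (GSeq s t) = pom_seq (gterm_sem s) (gterm_sem t)"
| "gterm_sem (GPar s t) = pom_par (gterm_sem s) (gterm_sem t)"

text \<open>A grammar: non-terminals (finite set of naturals), start symbol, finite set of rules.\<close>

type_synonym 'a grammar = "nat set \<times> nat \<times> (nat \<times> ('a, nat) gterm) set"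

definition is_grammar :: "'a grammar \<Rightarrow> bool" where
  "is_grammar G = (case G of (\<Gamma>, S, R) \<Rightarrow>
     finite \<Gamma> \<and> S \<in> \<Gamma> \<and> finite R \<and> (\<forall>(X, t)\<in>R. X \<in> \<Gamma> \<and> nts t \<subseteq> \<Gamma>))"

inductive gstep :: "(nat \<times> ('a, nat) gterm) set \<Rightarrow> ('a, nat) gterm \<Rightarrow> ('a, nat) gterm \<Rightarrow> bool"
  for R where
  step_rule: "(X, t) \<in> R \<Longrightarrow> gstep R (NT X) t"
| step_seqL: "gstep R s s' \<Longrightarrow> gstep R (GSeq s t) (GSeq s' t)"
| step_seqR: "gstep R t t' \<Longrightarrow> gstep R (GSeq s t) (GSeq s t')"
| step_parL: "gstep R s s' \<Longrightarrow> gstep R (GPar s t) (GPar s' t)"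
| step_parR: "gstep R t t' \<Longrightarrow> gstep R (GPar s t) (GPar s t')"

definition grammar_lang :: "'a grammar \<Rightarrow> 'a pomset set" where
  "grammar_lang G = (case G of (\<Gamma>, S, R) \<Rightarrow>
     {gterm_sem t | t. (gstep R)\<^sup>*\<^sup>* (NT S) t \<and> nts t = {}})"

definition context_free :: "'a pomset set \<Rightarrow> bool" where
  "context_free L \<longleftrightarrow> (\<exists>G. is_grammar G \<and> L = grammar_lang G)"

end

theory Submission
  imports Defs "HOL-Library.Countable"
begin

definition ev :: "nat \<Rightarrow> nat" where "ev x = 2 * x"
definition od :: "nat \<Rightarrow> nat" where "od x = 2 * x + 1"
definition lb :: "(nat \<Rightarrow> 'a) \<Rightarrow> (nat \<Rightarrow> 'a) \<Rightarrow> nat \<Rightarrow> 'a" where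
  "lb l1 l2 n = (if even n then l1 (n div 2) else l2 (n div 2))"

lemma ev_inj[simp]: "ev a = ev b \<longleftrightarrow> a = b" by (simp add: ev_def)
lemma od_inj[simp]: "od a = od b \<longleftrightarrow> a = b" by (simp add: od_def)
lemma ev_od[simp]: "ev a \<noteq> od b" "od b \<noteq> ev a" by (simp_all add: ev_def od_def) presburger+
lemma lb_ev[simp]: "lb l1 l2 (ev a) = l1 a" by (simp add: lb_def ev_def)
lemma lb_od[simp]: "lb l1 l2 (od a) = l2 a" by (simp add: lb_def od_def)
lemma inj_ev: "inj ev" by (simp add: inj_def)
lemma inj_od: "inj od" by (simp add: inj_def)

lemma img_ev[simp]: "ev a \<in> ev ` C \<longleftrightarrow> a \<in> C" by auto
lemma img_od[simp]: "od a \<in> od ` C \<longleftrightarrow> a \<in> C" by auto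
lemma img_evod[simp]: "ev a \<notin> od ` C" "od a \<notin> ev ` C" by auto
lemma pimg_ee[simp]: "(ev a, ev b) \<in> map_prod ev ev ` R \<longleftrightarrow> (a, b) \<in> R" by auto
lemma pimg_oo[simp]: "(od a, od b) \<in> map_prod od od ` R \<longleftrightarrow> (a, b) \<in> R" by auto
lemma pimg_x[simp]: "(ev a, y) \<notin> map_prod od od ` R" "(od a, y) \<notin> map_prod ev ev ` R"
   "(x, ev b) \<notin> map_prod od od ` R" "(x, od b) \<notin> map_prod ev ev ` R" by auto

lemma seq_eq: "lposet_seq (C1, R1, l1) (C2, R2, l2) =
  (ev ` C1 \<union> od ` C2, map_prod ev ev ` R1 \<union> map_prod od od ` R2 \<union> ev ` C1 \<times> od ` C2, lb l1 l2)"
  unfolding lposet_seq_def ev_def od_def lb_def map_prod_def by (simp add: case_prod_beta' fun_eq_iff)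

lemma par_eq: "lposet_par (C1, R1, l1) (C2, R2, l2) =
  (ev ` C1 \<union> od ` C2, map_prod ev ev ` R1 \<union> map_prod od od ` R2, lb l1 l2)"
  unfolding lposet_par_def ev_def od_def lb_def map_prod_def by (simp add: case_prod_beta' fun_eq_iff)

lemma iso_def2: "lposet_iso (C1, R1, l1) (C2, R2, l2) \<longleftrightarrow>
   (\<exists>f. bij_betw f C1 C2 \<and> (\<forall>x\<in>C1. \<forall>y\<in>C1. (x, y) \<in> R1 \<longleftrightarrow> (f x, f y) \<in> R2) \<and>
        (\<forall>x\<in>C1. l2 (f x) = l1 x))"
  by (simp add: lposet_iso_def)

lemma wf_def2: "lposet_wf (C, R, l) \<longleftrightarrow> finite C \<and> R \<subseteq> C \<times> C \<and> refl_on C R \<and> antisym R \<and> trans R"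
  by (simp add: lposet_wf_def)

lemma iso_refl: "lposet_iso P P"
proof -
  obtain C R l where P: "P = (C, R, l)" by (cases P) auto
  show ?thesis unfolding P iso_def2 by (rule exI[of _ id]) simp
qed

lemma iso_sym: assumes "lposet_iso P Q" shows "lposet_iso Q P"
proof -
  obtain C1 R1 l1 C2 R2 l2 where P: "P = (C1, R1, l1)" and Q: "Q = (C2, R2, l2)" by (cases P, cases Q) auto
  from assms obtain f where f: "bij_betw f C1 C2" "\<forall>x\<in>C1. \<forall>y\<in>C1. (x, y) \<in> R1 \<longleftrightarrow> (f x, f y) \<in> R2"
     "\<forall>x\<in>C1. l2 (f x) = l1 x" by (auto simp: P Q iso_def2)
  let ?g = "inv_into C1 f"
  have g: "bij_betw ?g C2 C1" using f(1) by (rule bij_betw_inv_into)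
  have gi: "\<And>x. x \<in> C2 \<Longrightarrow> ?g x \<in> C1 \<and> f (?g x) = x"
    using f(1) by (meson bij_betw_apply bij_betw_inv_into_right g)
  show ?thesis unfolding P Q iso_def2
  proof (rule exI[of _ ?g], intro conjI ballI)
    show "bij_betw ?g C2 C1" by (rule g)
  next
    fix x y assume "x \<in> C2" "y \<in> C2"
    thus "(x, y) \<in> R2 \<longleftrightarrow> (?g x, ?g y) \<in> R1" using gi f(2) by metis
  next
    fix x assume "x \<in> C2"
    thus "l1 (?g x) = l2 x" using gi f(3) by metis
  qed
qed

lemma iso_trans: assumes "lposet_iso P Q" "lposet_iso Q S" shows "lposet_iso P S"
proof -
  obtain C1 R1 l1 where P: "P = (C1, R1, l1)" by (cases P) auto
  obtain C2 R2 l2 where Q: "Q = (C2, R2, l2)" by (cases Q) auto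
  obtain C3 R3 l3 where S: "S = (C3, R3, l3)" by (cases S) auto
  from assms(1) obtain f where f: "bij_betw f C1 C2" "\<forall>x\<in>C1. \<forall>y\<in>C1. (x, y) \<in> R1 \<longleftrightarrow> (f x, f y) \<in> R2"
     "\<forall>x\<in>C1. l2 (f x) = l1 x" using assms(1) unfolding P Q iso_def2 by blast
  from assms(2) obtain g where g: "bij_betw g C2 C3" "\<forall>x\<in>C2. \<forall>y\<in>C2. (x, y) \<in> R2 \<longleftrightarrow> (g x, g y) \<in> R3"
     "\<forall>x\<in>C2. l3 (g x) = l2 x" using assms(2) unfolding Q S iso_def2 by blast
  have fc: "\<And>x. x \<in> C1 \<Longrightarrow> f x \<in> C2" by (rule bij_betw_apply[OF f(1)])
  show ?thesis unfolding P S iso_def2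
  proof (rule exI[of _ "g \<circ> f"], intro conjI ballI)
    show "bij_betw (g \<circ> f) C1 C3" using f(1) g(1) by (rule bij_betw_trans)
  next
    fix x y assume "x \<in> C1" "y \<in> C1"
    thus "(x, y) \<in> R1 \<longleftrightarrow> ((g \<circ> f) x, (g \<circ> f) y) \<in> R3" using f(2) g(2) fc by simp
  next
    fix x assume "x \<in> C1"
    thus "l3 ((g \<circ> f) x) = l1 x" using f(3) g(3) fc by simp
  qed
qed

definition cls :: "'a lposet \<Rightarrow> 'a lposet set" where
  "cls P = {Q. lposet_wf Q \<and> lposet_iso P Q}"

lemma cls_eq: "lposet_iso P Q \<Longrightarrow> cls P = cls Q"
proof -
  assume a: "lposet_iso P Q"
  have "\<And>X. lposet_iso P X \<longleftrightarrow> lposet_iso Q X"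
    using a iso_sym[OF a] by (meson iso_trans)
  thus ?thesis unfolding cls_def by simp
qed

lemma Rep_cls: "\<exists>P. lposet_wf P \<and> Rep_pomset U = cls P"
proof -
  have "Rep_pomset U \<in> {K. \<exists>P. lposet_wf P \<and> K = {Q. lposet_wf Q \<and> lposet_iso P Q}}"
    by (rule Rep_pomset)
  then obtain P where "lposet_wf P" "Rep_pomset U = {Q. lposet_wf Q \<and> lposet_iso P Q}" by blast
  thus ?thesis unfolding cls_def by blast
qed

lemma pom_rep: "lposet_wf (pom_rep U) \<and> Rep_pomset U = cls (pom_rep U)"
proof -
  obtain P where P: "lposet_wf P" "Rep_pomset U = cls P" using Rep_cls by blast
  have "P \<in> cls P" using P(1) iso_refl[of P] by (simp add: cls_def)
  hence "P \<in> Rep_pomset U" using P(2) by simp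
  hence "pom_rep U \<in> Rep_pomset U" unfolding pom_rep_def by (rule someI)
  hence "pom_rep U \<in> cls P" using P(2) by simp
  hence w: "lposet_wf (pom_rep U)" and i: "lposet_iso P (pom_rep U)" unfolding cls_def by simp_all
  show ?thesis using w cls_eq[OF i] P(2) by (simp only:)
qed

lemma pom_of_rep: "pom_of (pom_rep U) = U"
proof -
  have "pom_of (pom_rep U) = Abs_pomset (cls (pom_rep U))" by (simp add: pom_of_def cls_def)
  also have "\<dots> = Abs_pomset (Rep_pomset U)" using pom_rep[of U] by simp
  finally show ?thesis by (simp add: Rep_pomset_inverse)
qed

lemma pom_of_eq: "lposet_iso P Q \<Longrightarrow> pom_of P = pom_of Q"
proof -
  assume "lposet_iso P Q"
  hence "cls P = cls Q" by (rule cls_eq)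
  thus ?thesis by (simp add: pom_of_def cls_def)
qed

lemma Rep_pom_of: "lposet_wf P \<Longrightarrow> Rep_pomset (pom_of P) = cls P"
proof -
  assume "lposet_wf P"
  hence "cls P \<in> {K. \<exists>P. lposet_wf P \<and> K = {Q. lposet_wf Q \<and> lposet_iso P Q}}"
    unfolding cls_def by blast
  hence "Rep_pomset (Abs_pomset (cls P)) = cls P" by (rule Abs_pomset_inverse)
  thus ?thesis by (simp add: pom_of_def cls_def)
qed

lemma rep_of: "lposet_wf P \<Longrightarrow> lposet_iso P (pom_rep (pom_of P))"
proof -
  assume a: "lposet_wf P"
  have "pom_rep (pom_of P) \<in> cls (pom_rep (pom_of P))" 
    using pom_rep[of "pom_of P"] iso_refl by (simp add: cls_def)
  hence "pom_rep (pom_of P) \<in> cls P" using pom_rep[of "pom_of P"] Rep_pom_of[OF a] by simp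
  thus ?thesis by (simp add: cls_def)
qed


lemma seq_wf: assumes "lposet_wf P" "lposet_wf Q" shows "lposet_wf (lposet_seq P Q)"
proof -
  obtain C1 R1 l1 C2 R2 l2 where P: "P = (C1, R1, l1)" and Q: "Q = (C2, R2, l2)" by (cases P, cases Q) auto
  have a: "finite C1" "R1 \<subseteq> C1 \<times> C1" "refl_on C1 R1" "antisym R1" "trans R1"
   and b: "finite C2" "R2 \<subseteq> C2 \<times> C2" "refl_on C2 R2" "antisym R2" "trans R2"
    using assms by (auto simp: P Q wf_def2)
  show ?thesis unfolding P Q seq_eq wf_def2
  proof (intro conjI)
    show "finite (ev ` C1 \<union> od ` C2)" using a b by simp
    show "map_prod ev ev ` R1 \<union> map_prod od od ` R2 \<union> ev ` C1 \<times> od ` C2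
      \<subseteq> (ev ` C1 \<union> od ` C2) \<times> (ev ` C1 \<union> od ` C2)" using a b by auto
    show "refl_on (ev ` C1 \<union> od ` C2) (map_prod ev ev ` R1 \<union> map_prod od od ` R2 \<union> ev ` C1 \<times> od ` C2)"
      using a b by (auto simp: refl_on_def)
    show "antisym (map_prod ev ev ` R1 \<union> map_prod od od ` R2 \<union> ev ` C1 \<times> od ` C2)"
      using a(4) b(4) unfolding antisym_def by auto
    show "trans (map_prod ev ev ` R1 \<union> map_prod od od ` R2 \<union> ev ` C1 \<times> od ` C2)"
      using a(2,5) b(2,5) unfolding trans_def by fastforce
  qed
qed

lemma par_wf: assumes "lposet_wf P" "lposet_wf Q" shows "lposet_wf (lposet_par P Q)"
proof -
  obtain C1 R1 l1 C2 R2 l2 where P: "P = (C1, R1, l1)" and Q: "Q = (C2, R2, l2)" by (cases P, cases Q) auto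
  have a: "finite C1" "R1 \<subseteq> C1 \<times> C1" "refl_on C1 R1" "antisym R1" "trans R1"
   and b: "finite C2" "R2 \<subseteq> C2 \<times> C2" "refl_on C2 R2" "antisym R2" "trans R2"
    using assms by (auto simp: P Q wf_def2)
  show ?thesis unfolding P Q par_eq wf_def2
  proof (intro conjI)
    show "finite (ev ` C1 \<union> od ` C2)" using a b by simp
    show "map_prod ev ev ` R1 \<union> map_prod od od ` R2
      \<subseteq> (ev ` C1 \<union> od ` C2) \<times> (ev ` C1 \<union> od ` C2)" using a b by auto
    show "refl_on (ev ` C1 \<union> od ` C2) (map_prod ev ev ` R1 \<union> map_prod od od ` R2)"
      using a b by (auto simp: refl_on_def)
    show "antisym (map_prod ev ev ` R1 \<union> map_prod od od ` R2)"
      using a(4) b(4) unfolding antisym_def by auto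
    show "trans (map_prod ev ev ` R1 \<union> map_prod od od ` R2)"
      using a(2,5) b(2,5) unfolding trans_def by fastforce
  qed
qed

definition hh :: "(nat \<Rightarrow> nat) \<Rightarrow> (nat \<Rightarrow> nat) \<Rightarrow> nat \<Rightarrow> nat" where
  "hh f g n = (if even n then ev (f (n div 2)) else od (g (n div 2)))"
lemma hh_ev[simp]: "hh f g (ev a) = ev (f a)" by (simp add: hh_def ev_def)
lemma hh_od[simp]: "hh f g (od a) = od (g a)" by (simp add: hh_def od_def)

lemma bij_hh: assumes "bij_betw f C1 C1'" "bij_betw g C2 C2'"
  shows "bij_betw (hh f g) (ev ` C1 \<union> od ` C2) (ev ` C1' \<union> od ` C2')"
proof -
  have i1: "inj_on f C1" and i2: "inj_on g C2" and e1: "f ` C1 = C1'" and e2: "g ` C2 = C2'"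
    using assms by (simp_all add: bij_betw_def)
  have "inj_on (hh f g) (ev ` C1 \<union> od ` C2)"
  proof (rule inj_onI)
    fix x y assume x: "x \<in> ev ` C1 \<union> od ` C2" and y: "y \<in> ev ` C1 \<union> od ` C2" and h: "hh f g x = hh f g y"
    from x y h show "x = y"
      apply (elim UnE imageE)
      using i1 i2 by (simp_all add: inj_on_def)
  qed
  moreover have "hh f g ` (ev ` C1 \<union> od ` C2) = ev ` C1' \<union> od ` C2'"
    unfolding image_Un image_image e1[symmetric] e2[symmetric] by simp
  ultimately show ?thesis by (simp add: bij_betw_def)
qed

lemma seq_cong: assumes "lposet_iso P P'" "lposet_iso Q Q'"
  shows "lposet_iso (lposet_seq P Q) (lposet_seq P' Q')"
proof -
  obtain C1 R1 l1 C2 R2 l2 where P: "P = (C1, R1, l1)" and Q: "Q = (C2, R2, l2)" by (cases P, cases Q) auto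
  obtain C1' R1' l1' C2' R2' l2' where P': "P' = (C1', R1', l1')" and Q': "Q' = (C2', R2', l2')" by (cases P', cases Q') auto
  from assms(1) obtain f where f: "bij_betw f C1 C1'" "\<forall>x\<in>C1. \<forall>y\<in>C1. (x, y) \<in> R1 \<longleftrightarrow> (f x, f y) \<in> R1'"
     "\<forall>x\<in>C1. l1' (f x) = l1 x" using assms(1) unfolding P P' iso_def2 by blast
  from assms(2) obtain g where g: "bij_betw g C2 C2'" "\<forall>x\<in>C2. \<forall>y\<in>C2. (x, y) \<in> R2 \<longleftrightarrow> (g x, g y) \<in> R2'"
     "\<forall>x\<in>C2. l2' (g x) = l2 x" using assms(2) unfolding Q Q' iso_def2 by blast
  have fc: "\<And>x. x \<in> C1 \<Longrightarrow> f x \<in> C1'" by (rule bij_betw_apply[OF f(1)])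
  have gc: "\<And>x. x \<in> C2 \<Longrightarrow> g x \<in> C2'" by (rule bij_betw_apply[OF g(1)])
  show ?thesis unfolding P Q P' Q' seq_eq iso_def2
  proof (rule exI[of _ "hh f g"], intro conjI ballI)
    show "bij_betw (hh f g) (ev ` C1 \<union> od ` C2) (ev ` C1' \<union> od ` C2')" by (rule bij_hh[OF f(1) g(1)])
  next
    fix x y assume x: "x \<in> ev ` C1 \<union> od ` C2" and y: "y \<in> ev ` C1 \<union> od ` C2"
    show "(x, y) \<in> map_prod ev ev ` R1 \<union> map_prod od od ` R2 \<union> ev ` C1 \<times> od ` C2 \<longleftrightarrow>
       (hh f g x, hh f g y) \<in> map_prod ev ev ` R1' \<union> map_prod od od ` R2' \<union> ev ` C1' \<times> od ` C2'"
      using x y apply (elim UnE imageE)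
      using f(2) g(2) fc gc by simp_all
  next
    fix x assume x: "x \<in> ev ` C1 \<union> od ` C2"
    show "lb l1' l2' (hh f g x) = lb l1 l2 x" using x f(3) g(3) by auto
  qed
qed

lemma par_cong: assumes "lposet_iso P P'" "lposet_iso Q Q'"
  shows "lposet_iso (lposet_par P Q) (lposet_par P' Q')"
proof -
  obtain C1 R1 l1 C2 R2 l2 where P: "P = (C1, R1, l1)" and Q: "Q = (C2, R2, l2)" by (cases P, cases Q) auto
  obtain C1' R1' l1' C2' R2' l2' where P': "P' = (C1', R1', l1')" and Q': "Q' = (C2', R2', l2')" by (cases P', cases Q') auto
  from assms(1) obtain f where f: "bij_betw f C1 C1'" "\<forall>x\<in>C1. \<forall>y\<in>C1. (x, y) \<in> R1 \<longleftrightarrow> (f x, f y) \<in> R1'"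
     "\<forall>x\<in>C1. l1' (f x) = l1 x" using assms(1) unfolding P P' iso_def2 by blast
  from assms(2) obtain g where g: "bij_betw g C2 C2'" "\<forall>x\<in>C2. \<forall>y\<in>C2. (x, y) \<in> R2 \<longleftrightarrow> (g x, g y) \<in> R2'"
     "\<forall>x\<in>C2. l2' (g x) = l2 x" using assms(2) unfolding Q Q' iso_def2 by blast
  show ?thesis unfolding P Q P' Q' par_eq iso_def2
  proof (rule exI[of _ "hh f g"], intro conjI ballI)
    show "bij_betw (hh f g) (ev ` C1 \<union> od ` C2) (ev ` C1' \<union> od ` C2')" by (rule bij_hh[OF f(1) g(1)])
  next
    fix x y assume x: "x \<in> ev ` C1 \<union> od ` C2" and y: "y \<in> ev ` C1 \<union> od ` C2"
    show "(x, y) \<in> map_prod ev ev ` R1 \<union> map_prod od od ` R2 \<longleftrightarrow>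
       (hh f g x, hh f g y) \<in> map_prod ev ev ` R1' \<union> map_prod od od ` R2'"
      using x y apply (elim UnE imageE)
      using f(2) g(2) by simp_all
  next
    fix x assume x: "x \<in> ev ` C1 \<union> od ` C2"
    show "lb l1' l2' (hh f g x) = lb l1 l2 x" using x f(3) g(3) by auto
  qed
qed

lemma pom_seq_of: "lposet_wf P \<Longrightarrow> lposet_wf Q \<Longrightarrow> pom_seq (pom_of P) (pom_of Q) = pom_of (lposet_seq P Q)"
  unfolding pom_seq_def by (metis pom_of_eq seq_cong rep_of iso_sym)

lemma pom_par_of: "lposet_wf P \<Longrightarrow> lposet_wf Q \<Longrightarrow> pom_par (pom_of P) (pom_of Q) = pom_of (lposet_par P Q)"
  unfolding pom_par_def by (metis pom_of_eq par_cong rep_of iso_sym)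

lemma pom_cases: obtains P where "lposet_wf P" "U = pom_of P"
  using pom_rep pom_of_rep by metis

definition E0 :: "'a lposet" where "E0 = ({}, {}, \<lambda>_. undefined)"
lemma E0_wf: "lposet_wf E0" by (simp add: E0_def wf_def2 refl_on_def antisym_def trans_def)
lemma one_E0: "pom_one = pom_of E0" by (simp add: pom_one_def E0_def)

lemma iso_map: assumes "inj f" "R \<subseteq> C \<times> C" "\<And>x. l' (f x) = l x"
  shows "lposet_iso (C, R, l) (f ` C, map_prod f f ` R, l')"
  unfolding iso_def2
proof (rule exI[of _ f], intro conjI ballI)
  show "bij_betw f C (f ` C)" by (rule inj_on_imp_bij_betw[OF inj_on_subset[OF assms(1) subset_UNIV]])
  fix x y show "(x, y) \<in> R \<longleftrightarrow> (f x, f y) \<in> map_prod f f ` R"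
    using assms(1) by (auto simp: inj_def)
next
  fix x show "l' (f x) = l x" by (rule assms(3))
qed

lemma seq_one_left: "pom_seq pom_one U = U"
proof -
  obtain P where P: "lposet_wf P" "U = pom_of P" by (rule pom_cases)
  obtain C R l where Pc: "P = (C, R, l)" by (cases P) auto
  have RC: "R \<subseteq> C \<times> C" using P(1) by (simp add: Pc wf_def2)
  have "lposet_seq E0 P = (od ` C, map_prod od od ` R, lb (\<lambda>_. undefined) l)"
    by (simp add: E0_def Pc seq_eq)
  hence "lposet_iso P (lposet_seq E0 P)" using iso_map[OF inj_od RC, of "lb (\<lambda>_. undefined) l" l] Pc by simp
  hence eq: "pom_of P = pom_of (lposet_seq E0 P)" by (rule pom_of_eq)
  have "pom_seq pom_one U = pom_of (lposet_seq E0 P)" by (simp add: one_E0 P(2) pom_seq_of[OF E0_wf P(1)])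
  also have "\<dots> = U" using eq P(2) by simp
  finally show ?thesis .
qed

lemma seq_one_right: "pom_seq U pom_one = U"
proof -
  obtain P where P: "lposet_wf P" "U = pom_of P" by (rule pom_cases)
  obtain C R l where Pc: "P = (C, R, l)" by (cases P) auto
  have RC: "R \<subseteq> C \<times> C" using P(1) by (simp add: Pc wf_def2)
  have "lposet_seq P E0 = (ev ` C, map_prod ev ev ` R, lb l (\<lambda>_. undefined))"
    by (simp add: E0_def Pc seq_eq)
  hence "lposet_iso P (lposet_seq P E0)" using iso_map[OF inj_ev RC, of "lb l (\<lambda>_. undefined)" l] Pc by simp
  hence eq: "pom_of P = pom_of (lposet_seq P E0)" by (rule pom_of_eq)
  have "pom_seq U pom_one = pom_of (lposet_seq P E0)" by (simp add: one_E0 P(2) pom_seq_of[OF P(1) E0_wf])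
  also have "\<dots> = U" using eq P(2) by simp
  finally show ?thesis .
qed

lemma par_one_right: "pom_par U pom_one = U"
proof -
  obtain P where P: "lposet_wf P" "U = pom_of P" by (rule pom_cases)
  obtain C R l where Pc: "P = (C, R, l)" by (cases P) auto
  have RC: "R \<subseteq> C \<times> C" using P(1) by (simp add: Pc wf_def2)
  have "lposet_par P E0 = (ev ` C, map_prod ev ev ` R, lb l (\<lambda>_. undefined))"
    by (simp add: E0_def Pc par_eq)
  hence "lposet_iso P (lposet_par P E0)" using iso_map[OF inj_ev RC, of "lb l (\<lambda>_. undefined)" l] Pc by simp
  hence eq: "pom_of P = pom_of (lposet_par P E0)" by (rule pom_of_eq)
  have "pom_par U pom_one = pom_of (lposet_par P E0)" by (simp add: one_E0 P(2) pom_par_of[OF P(1) E0_wf])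
  also have "\<dots> = U" using eq P(2) by simp
  finally show ?thesis .
qed

definition fa :: "nat \<Rightarrow> nat" where
  "fa n = (if odd n then od (od (n div 2)) else if even (n div 2) then ev (n div 4) else od (ev (n div 4)))"
lemma fa1[simp]: "fa (ev (ev a)) = ev a" by (simp add: fa_def ev_def)
lemma fa2[simp]: "fa (ev (od a)) = od (ev a)" by (simp add: fa_def ev_def od_def)
lemma fa3[simp]: "fa (od a) = od (od a)" by (simp add: fa_def od_def)

lemma seq_assoc_iso: "lposet_iso (lposet_seq (lposet_seq P Q) S) (lposet_seq P (lposet_seq Q S))"
proof -
  obtain C1 R1 l1 C2 R2 l2 C3 R3 l3 where P: "P = (C1, R1, l1)" and Q: "Q = (C2, R2, l2)"
    and S: "S = (C3, R3, l3)" by (cases P, cases Q, cases S) auto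
  have "bij_betw fa (ev ` (ev ` C1 \<union> od ` C2) \<union> od ` C3) (ev ` C1 \<union> od ` (ev ` C2 \<union> od ` C3))"
    unfolding bij_betw_def inj_on_def by (auto simp: image_Un image_image)
  moreover have cs: "\<And>x. x \<in> ev ` (ev ` C1 \<union> od ` C2) \<union> od ` C3 \<Longrightarrow>
     (\<exists>a\<in>C1. x = ev (ev a)) \<or> (\<exists>a\<in>C2. x = ev (od a)) \<or> (\<exists>a\<in>C3. x = od a)" by blast
  ultimately show ?thesis unfolding P Q S seq_eq iso_def2
    apply (intro exI[of _ fa] conjI ballI)
      apply assumption
     apply (drule cs, drule cs, (elim disjE bexE; simp))
    apply (drule cs, (elim disjE bexE; simp))
    done
qed

lemma seq_assoc: "pom_seq (pom_seq U V) W = pom_seq U (pom_seq V W)"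
proof -
  obtain P where P: "lposet_wf P" "U = pom_of P" by (rule pom_cases)
  obtain Q where Q: "lposet_wf Q" "V = pom_of Q" by (rule pom_cases)
  obtain S where S: "lposet_wf S" "W = pom_of S" by (rule pom_cases)
  show ?thesis using P Q S seq_assoc_iso[of P Q S]
    by (simp add: pom_seq_of seq_wf pom_of_eq)
qed


inductive gen :: "(nat \<times> ('a, nat) gterm) set \<Rightarrow> ('a, nat) gterm \<Rightarrow> 'a pomset \<Rightarrow> bool" for R where
  gen_term: "gen R (Term a) (pom_prim a)"
| gen_eps: "gen R Eps pom_one"
| gen_seq: "gen R s A \<Longrightarrow> gen R t B \<Longrightarrow> gen R (GSeq s t) (pom_seq A B)"
| gen_par: "gen R s A \<Longrightarrow> gen R t B \<Longrightarrow> gen R (GPar s t) (pom_par A B)"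
| gen_nt: "(X, t) \<in> R \<Longrightarrow> gen R t U \<Longrightarrow> gen R (NT X) U"

lemma gen_closed: "nts t = {} \<Longrightarrow> gen R t (gterm_sem t)"
  by (induction t) (auto intro: gen.intros)

lemma gen_step: "gstep R s s' \<Longrightarrow> gen R s' U \<Longrightarrow> gen R s U"
proof (induction arbitrary: U rule: gstep.induct)
  case (step_rule X t) thus ?case by (rule gen_nt)
next
  case (step_seqL s s' t) from step_seqL.prems show ?case
    by (cases rule: gen.cases) (auto intro: gen.intros step_seqL.IH)
next
  case (step_seqR t t' s) from step_seqR.prems show ?case
    by (cases rule: gen.cases) (auto intro: gen.intros step_seqR.IH)
next
  case (step_parL s s' t) from step_parL.prems show ?case
    by (cases rule: gen.cases) (auto intro: gen.intros step_parL.IH)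
next
  case (step_parR t t' s) from step_parR.prems show ?case
    by (cases rule: gen.cases) (auto intro: gen.intros step_parR.IH)
qed

lemma gen_steps: "(gstep R)\<^sup>*\<^sup>* s t \<Longrightarrow> gen R t U \<Longrightarrow> gen R s U"
  by (induction rule: converse_rtranclp_induct) (auto intro: gen_step)

lemma steps_seqL: "(gstep R)\<^sup>*\<^sup>* s s' \<Longrightarrow> (gstep R)\<^sup>*\<^sup>* (GSeq s t) (GSeq s' t)"
  by (induction rule: rtranclp_induct) (auto intro: rtranclp.rtrancl_into_rtrancl step_seqL)
lemma steps_seqR: "(gstep R)\<^sup>*\<^sup>* t t' \<Longrightarrow> (gstep R)\<^sup>*\<^sup>* (GSeq s t) (GSeq s t')"
  by (induction rule: rtranclp_induct) (auto intro: rtranclp.rtrancl_into_rtrancl step_seqR)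
lemma steps_parL: "(gstep R)\<^sup>*\<^sup>* s s' \<Longrightarrow> (gstep R)\<^sup>*\<^sup>* (GPar s t) (GPar s' t)"
  by (induction rule: rtranclp_induct) (auto intro: rtranclp.rtrancl_into_rtrancl step_parL)
lemma steps_parR: "(gstep R)\<^sup>*\<^sup>* t t' \<Longrightarrow> (gstep R)\<^sup>*\<^sup>* (GPar s t) (GPar s t')"
  by (induction rule: rtranclp_induct) (auto intro: rtranclp.rtrancl_into_rtrancl step_parR)

lemma gen_derive: "gen R s U \<Longrightarrow> \<exists>t. (gstep R)\<^sup>*\<^sup>* s t \<and> nts t = {} \<and> gterm_sem t = U"
proof (induction rule: gen.induct)
  case (gen_term a) thus ?case by (intro exI[of _ "Term a"]) auto
next
  case gen_eps thus ?case by (intro exI[of _ Eps]) auto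
next
  case (gen_seq s A t B)
  then obtain s' t' where "(gstep R)\<^sup>*\<^sup>* s s'" "nts s' = {}" "gterm_sem s' = A"
    "(gstep R)\<^sup>*\<^sup>* t t'" "nts t' = {}" "gterm_sem t' = B" by blast
  thus ?case by (intro exI[of _ "GSeq s' t'"])
    (auto intro: rtranclp_trans[OF steps_seqL steps_seqR])
next
  case (gen_par s A t B)
  then obtain s' t' where "(gstep R)\<^sup>*\<^sup>* s s'" "nts s' = {}" "gterm_sem s' = A"
    "(gstep R)\<^sup>*\<^sup>* t t'" "nts t' = {}" "gterm_sem t' = B" by blast
  thus ?case by (intro exI[of _ "GPar s' t'"])
    (auto intro: rtranclp_trans[OF steps_parL steps_parR])
next
  case (gen_nt X t U)
  then obtain t' where "(gstep R)\<^sup>*\<^sup>* t t'" "nts t' = {}" "gterm_sem t' = U" by blast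
  moreover have "gstep R (NT X) t" using gen_nt(1) by (rule step_rule)
  ultimately show ?case by (blast intro: converse_rtranclp_into_rtranclp)
qed

lemma grammar_lang_gen: "grammar_lang (\<Gamma>, S, R) = {U. gen R (NT S) U}"
  unfolding grammar_lang_def
  using gen_derive gen_steps gen_closed by fastforce


lemma trace_states: "pa_trace A p U p' \<Longrightarrow> is_pa A \<Longrightarrow> p \<in> pa_states A \<and> p' \<in> pa_states A"
  by (induction rule: pa_trace.induct) (auto simp: is_pa_def)

definition NN :: "nat \<Rightarrow> nat \<Rightarrow> nat" where "NN p p' = Suc (to_nat (p, p'))"

lemma NN_inj[simp]: "NN p p' = NN q q' \<longleftrightarrow> p = q \<and> p' = q'" by (simp add: NN_def)
lemma NN_nz[simp]: "NN p p' \<noteq> 0" "0 \<noteq> NN p p'" by (simp_all add: NN_def)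

definition pa_rules :: "'a pa \<Rightarrow> nat \<Rightarrow> (nat \<times> ('a, nat) gterm) set" where
  "pa_rules A q =
     (\<lambda>p. (NN p p, Eps)) ` pa_states A
   \<union> (\<lambda>(p, a). (NN p (pa_delta A p a), Term a)) ` (pa_states A \<times> UNIV)
   \<union> (\<lambda>(p, p', p''). (NN p p', GSeq (NT (NN p p'')) (NT (NN p'' p')))) ` (pa_states A \<times> pa_states A \<times> pa_states A)
   \<union> (\<lambda>(p, r, s, r', s'). (NN p (pa_gamma A p r s), GPar (NT (NN r r')) (NT (NN s s'))))
        ` (pa_states A \<times> pa_states A \<times> pa_states A \<times> pa_final A \<times> pa_final A)
   \<union> (\<lambda>q'. (0, NT (NN q q'))) ` pa_final A"

fun okP :: "'a pa \<Rightarrow> nat \<Rightarrow> ('a, nat) gterm \<Rightarrow> 'a pomset \<Rightarrow> bool" where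
  "okP A q (NT X) U = ((\<forall>p p'. X = NN p p' \<longrightarrow> pa_trace A p U p') \<and> (X = 0 \<longrightarrow> (\<exists>q'\<in>pa_final A. pa_trace A q U q')))"
| "okP A q Eps U = (U = pom_one)"
| "okP A q (Term a) U = (U = pom_prim a)"
| "okP A q (GSeq s t) U = (\<exists>V W. U = pom_seq V W \<and> okP A q s V \<and> okP A q t W)"
| "okP A q (GPar s t) U = (\<exists>V W. U = pom_par V W \<and> okP A q s V \<and> okP A q t W)"

lemma gen_okP: assumes "is_pa A" shows "gen (pa_rules A q) t U \<Longrightarrow> okP A q t U"
proof (induction rule: gen.induct)
  case (gen_nt X t U)
  from gen_nt(1) show ?case unfolding pa_rules_def
  proof (elim UnE imageE)
    fix p assume "(X, t) = (\<lambda>p. (NN p p, Eps)) p" "p \<in> pa_states A"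
    thus ?thesis using gen_nt(3) by (auto intro: pa_trace.intros)
  next
    fix x assume "(X, t) = (\<lambda>(p, a). (NN p (pa_delta A p a), Term a)) x" "x \<in> pa_states A \<times> UNIV"
    thus ?thesis using gen_nt(3) by (auto intro: pa_trace.intros)
  next
    fix x assume "(X, t) = (\<lambda>(p, p', p''). (NN p p', GSeq (NT (NN p p'')) (NT (NN p'' p')))) x"
      "x \<in> pa_states A \<times> pa_states A \<times> pa_states A"
    thus ?thesis using gen_nt(3) by (auto intro: pa_trace.intros)
  next
    fix x assume "(X, t) = (\<lambda>(p, r, s, r', s'). (NN p (pa_gamma A p r s), GPar (NT (NN r r')) (NT (NN s s')))) x"
      "x \<in> pa_states A \<times> pa_states A \<times> pa_states A \<times> pa_final A \<times> pa_final A"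
    thus ?thesis using gen_nt(3) by (auto intro: pa_trace.intros)
  next
    fix q' assume "(X, t) = (\<lambda>q'. (0, NT (NN q q'))) q'" "q' \<in> pa_final A"
    thus ?thesis using gen_nt(3) by auto
  qed
qed auto

lemma trace_gen: assumes "is_pa A" shows "pa_trace A p U p' \<Longrightarrow> gen (pa_rules A q) (NT (NN p p')) U"
proof (induction rule: pa_trace.induct)
  case (tr_one p)
  hence "(NN p p, Eps) \<in> pa_rules A q" unfolding pa_rules_def by (intro UnI1 image_eqI[of _ _ p]) simp_all
  thus ?case by (rule gen_nt) (rule gen_eps)
next
  case (tr_prim p a)
  hence "(p, a) \<in> pa_states A \<times> UNIV" by simp
  hence "(NN p (pa_delta A p a), Term a) \<in> pa_rules A q" unfolding pa_rules_def
    by (intro UnI1 UnI2 image_eqI[of _ _ "(p, a)"]) simp_all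
  thus ?case by (rule gen_nt) (rule gen_term)
next
  case (tr_seq p U p'' V p')
  have "p \<in> pa_states A" "p' \<in> pa_states A" "p'' \<in> pa_states A"
    using trace_states[OF tr_seq(1) assms] trace_states[OF tr_seq(2) assms] by auto
  hence "(p, p', p'') \<in> pa_states A \<times> pa_states A \<times> pa_states A" by simp
  hence "(NN p p', GSeq (NT (NN p p'')) (NT (NN p'' p'))) \<in> pa_rules A q" unfolding pa_rules_def
    by (intro UnI1 UnI2 image_eqI[of _ _ "(p, p', p'')"]) simp_all
  thus ?case by (rule gen_nt) (rule gen_seq[OF tr_seq(3,4)])
next
  case (tr_par p r U r' s V s')
  have "r \<in> pa_states A" "s \<in> pa_states A"
    using trace_states[OF tr_par(2) assms] trace_states[OF tr_par(4) assms] by auto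
  hence "(p, r, s, r', s') \<in> pa_states A \<times> pa_states A \<times> pa_states A \<times> pa_final A \<times> pa_final A"
    using tr_par(1,3,5) by simp
  hence "(NN p (pa_gamma A p r s), GPar (NT (NN r r')) (NT (NN s s'))) \<in> pa_rules A q"
    unfolding pa_rules_def by (intro UnI1 UnI2 image_eqI[of _ _ "(p, r, s, r', s')"]) simp_all
  thus ?case by (rule gen_nt) (rule gen_par[OF tr_par(6,7)])
qed

lemma pa_to_cf: fixes A :: "'a::finite pa" assumes "finite_pa A" "q \<in> pa_states A" shows "context_free (pa_lang A q)"
proof -
  have pa: "is_pa A" and fin: "finite (pa_states A)" using assms(1) by (auto simp: finite_pa_def)
  have finF: "finite (pa_final A)" using pa fin by (meson finite_subset is_pa_def)
  define \<Gamma> where "\<Gamma> = insert 0 ((\<lambda>(p, p'). NN p p') ` (pa_states A \<times> pa_states A))"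
  have "is_grammar (\<Gamma>, 0, pa_rules A q)"
    unfolding is_grammar_def
  proof (simp, intro conjI)
    show "finite \<Gamma>" using fin by (simp add: \<Gamma>_def)
    show "0 \<in> \<Gamma>" by (simp add: \<Gamma>_def)
    show "finite (pa_rules A q)" using fin finF by (simp add: pa_rules_def)
    have G: "NN p p' \<in> \<Gamma>" if "p \<in> pa_states A" "p' \<in> pa_states A" for p p'
      using that unfolding \<Gamma>_def by (intro insertI2 image_eqI[of _ _ "(p, p')"]) simp_all
    have F: "\<And>p. p \<in> pa_final A \<Longrightarrow> p \<in> pa_states A" using pa by (auto simp: is_pa_def)
    have D: "\<And>p a. p \<in> pa_states A \<Longrightarrow> pa_delta A p a \<in> pa_states A" using pa by (auto simp: is_pa_def)
    have Gm: "\<And>p r s. p \<in> pa_states A \<Longrightarrow> r \<in> pa_states A \<Longrightarrow> s \<in> pa_states A \<Longrightarrow> pa_gamma A p r s \<in> pa_states A"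
      using pa by (auto simp: is_pa_def)
    show "\<forall>x\<in>pa_rules A q. case x of (X, t) \<Rightarrow> X \<in> \<Gamma> \<and> nts t \<subseteq> \<Gamma>"
      unfolding pa_rules_def
      apply (intro ballI)
      apply (elim UnE imageE)
      using G F D Gm assms(2) by (auto simp: \<Gamma>_def)
  qed
  moreover have "pa_lang A q = grammar_lang (\<Gamma>, 0, pa_rules A q)"
  proof -
    have "U \<in> pa_lang A q \<longleftrightarrow> gen (pa_rules A q) (NT 0) U" for U
    proof
      assume "U \<in> pa_lang A q"
      then obtain q' where q': "q' \<in> pa_final A" "pa_trace A q U q'" by (auto simp: pa_lang_def)
      hence "(0, NT (NN q q')) \<in> pa_rules A q" unfolding pa_rules_def by (intro UnI2 image_eqI[of _ _ q']) simp_all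
      thus "gen (pa_rules A q) (NT 0) U" by (rule gen_nt) (rule trace_gen[OF pa q'(2)])
    next
      assume "gen (pa_rules A q) (NT 0) U"
      hence "okP A q (NT 0) U" by (rule gen_okP[OF pa])
      thus "U \<in> pa_lang A q" by (simp add: pa_lang_def)
    qed
    thus ?thesis by (auto simp: grammar_lang_gen)
  qed
  ultimately show ?thesis unfolding context_free_def by blast
qed


instance gterm :: (countable, countable) countable by countable_datatype

type_synonym 'a st = "('a, nat) gterm list option"

fun Dd :: "'a st \<Rightarrow> 'a \<Rightarrow> 'a st" where
  "Dd (Some (Term b # rest)) a = (if a = b then Some rest else None)"
| "Dd _ _ = None"

fun Gg :: "(nat \<times> ('a, nat) gterm) set \<Rightarrow> 'a st \<Rightarrow> 'a st \<Rightarrow> 'a st \<Rightarrow> 'a st" where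
  "Gg R (Some (Eps # rest)) r s = (if r = Some [] \<and> s = Some [] then Some rest else None)"
| "Gg R (Some (GSeq t1 t2 # rest)) r s = (if r = Some [] \<and> s = Some [] then Some (t1 # t2 # rest) else None)"
| "Gg R (Some (NT X # rest)) r s = (if s = Some [] \<and> (\<exists>t. r = Some [t] \<and> (X, t) \<in> R) then Some rest else None)"
| "Gg R (Some (GPar t1 t2 # rest)) r s = (if r = Some [t1] \<and> s = Some [t2] then Some rest else None)"
| "Gg R _ _ _ = None"

fun sz :: "('a, nat) gterm \<Rightarrow> nat" where
  "sz (GSeq s t) = sz s + sz t + 1"
| "sz (GPar s t) = sz s + sz t + 1"
| "sz _ = 1"

fun subs :: "('a, nat) gterm \<Rightarrow> ('a, nat) gterm set" where
  "subs (GSeq s t) = insert (GSeq s t) (subs s \<union> subs t)"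
| "subs (GPar s t) = insert (GPar s t) (subs s \<union> subs t)"
| "subs t = {t}"

lemma sz_pos: "sz t \<ge> 1" by (cases t) auto
lemma subs_self: "t \<in> subs t" by (cases t) auto
lemma subs_fin: "finite (subs t)" by (induction t) auto
lemma subs_trans: "u \<in> subs t \<Longrightarrow> subs u \<subseteq> subs t"
  by (induction t) auto

definition TT :: "(nat \<times> ('a, nat) gterm) set \<Rightarrow> nat \<Rightarrow> ('a, nat) gterm set" where
  "TT R S = \<Union> (subs ` insert (NT S) (snd ` R))"
definition MM :: "(nat \<times> ('a, nat) gterm) set \<Rightarrow> nat \<Rightarrow> nat" where
  "MM R S = Max (sz ` TT R S)"
definition Reach :: "(nat \<times> ('a, nat) gterm) set \<Rightarrow> nat \<Rightarrow> ('a, nat) gterm list set" where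
  "Reach R S = {ts. set ts \<subseteq> TT R S \<and> sum_list (map sz ts) \<le> MM R S}"
definition St :: "(nat \<times> ('a, nat) gterm) set \<Rightarrow> nat \<Rightarrow> 'a st set" where
  "St R S = insert None (Some ` Reach R S)"

lemma TT_fin: "finite R \<Longrightarrow> finite (TT R S)" by (simp add: TT_def subs_fin)

lemma TT_seq: "GSeq t1 t2 \<in> TT R S \<Longrightarrow> t1 \<in> TT R S \<and> t2 \<in> TT R S"
proof -
  assume "GSeq t1 t2 \<in> TT R S"
  then obtain u where u: "u \<in> insert (NT S) (snd ` R)" "GSeq t1 t2 \<in> subs u" by (auto simp: TT_def)
  have "subs (GSeq t1 t2) \<subseteq> subs u" using u(2) by (rule subs_trans)
  hence "t1 \<in> subs u" "t2 \<in> subs u" using subs_self[of t1] subs_self[of t2] by auto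
  thus ?thesis using u(1) by (auto simp: TT_def)
qed

lemma TT_par: "GPar t1 t2 \<in> TT R S \<Longrightarrow> t1 \<in> TT R S \<and> t2 \<in> TT R S"
proof -
  assume "GPar t1 t2 \<in> TT R S"
  then obtain u where u: "u \<in> insert (NT S) (snd ` R)" "GPar t1 t2 \<in> subs u" by (auto simp: TT_def)
  have "subs (GPar t1 t2) \<subseteq> subs u" using u(2) by (rule subs_trans)
  hence "t1 \<in> subs u" "t2 \<in> subs u" using subs_self[of t1] subs_self[of t2] by auto
  thus ?thesis using u(1) by (auto simp: TT_def)
qed

lemma TT_rule: "(X, t) \<in> R \<Longrightarrow> t \<in> TT R S"
  unfolding TT_def using subs_self by force
lemma TT_S: "NT S \<in> TT R S"
  unfolding TT_def by simp

lemma Reach_single: "finite R \<Longrightarrow> t \<in> TT R S \<Longrightarrow> [t] \<in> Reach R S"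
  unfolding Reach_def MM_def using TT_fin by (auto intro: Max_ge)

lemma Reach_nil: "[] \<in> Reach R S" by (simp add: Reach_def)
lemma Reach_tl: "t # rest \<in> Reach R S \<Longrightarrow> rest \<in> Reach R S" by (auto simp: Reach_def)
lemma Reach_seq: "GSeq t1 t2 # rest \<in> Reach R S \<Longrightarrow> t1 # t2 # rest \<in> Reach R S"
proof -
  assume a: "GSeq t1 t2 # rest \<in> Reach R S"
  hence "GSeq t1 t2 \<in> TT R S" "set rest \<subseteq> TT R S" "sz t1 + sz t2 + 1 + sum_list (map sz rest) \<le> MM R S"
    by (auto simp: Reach_def)
  thus ?thesis using TT_seq[of t1 t2 R S] by (simp add: Reach_def)
qed
lemma Reach_par: "finite R \<Longrightarrow> GPar t1 t2 # rest \<in> Reach R S \<Longrightarrow> [t1] \<in> Reach R S \<and> [t2] \<in> Reach R S"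
proof -
  assume f: "finite R" and a: "GPar t1 t2 # rest \<in> Reach R S"
  hence "GPar t1 t2 \<in> TT R S" by (auto simp: Reach_def)
  thus ?thesis using TT_par[of t1 t2 R S] Reach_single[OF f] by blast
qed

lemma len_sz: "length ts \<le> sum_list (map sz ts)"
proof (induction ts)
  case Nil show ?case by simp
next
  case (Cons t ts) thus ?case using sz_pos[of t] by simp
qed

lemma Reach_fin: "finite R \<Longrightarrow> finite (Reach R S)"
proof -
  assume f: "finite R"
  have "Reach R S \<subseteq> {xs. set xs \<subseteq> TT R S \<and> length xs \<le> MM R S}"
    unfolding Reach_def using len_sz le_trans by blast
  thus ?thesis using finite_lists_length_le[OF TT_fin[OF f]] finite_subset by blast
qed

lemma Dd_St: "x \<in> St R S \<Longrightarrow> Dd x a \<in> St R S"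
  by (cases "(x, a)" rule: Dd.cases) (auto simp: St_def intro: Reach_tl)

lemma Gg_St: "x \<in> St R S \<Longrightarrow> Gg R x r s \<in> St R S"
  by (cases "(R, x, r, s)" rule: Gg.cases) (auto simp: St_def intro: Reach_tl Reach_seq)


definition mkpa :: "(nat \<times> ('a::finite, nat) gterm) set \<Rightarrow> nat \<Rightarrow> 'a pa" where
  "mkpa R S = \<lparr>pa_states = to_nat ` St R S,
     pa_delta = (\<lambda>n a. to_nat (Dd (from_nat n) a)),
     pa_gamma = (\<lambda>n r s. to_nat (Gg R (from_nat n) (from_nat r) (from_nat s))),
     pa_final = {to_nat (Some [] :: 'a st)},
     pa_bot = to_nat (None :: 'a st),
     pa_top = to_nat (Some [] :: 'a st)\<rparr>"

lemma mkpa_simps[simp]: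
  fixes R :: "(nat \<times> ('a::finite, nat) gterm) set"
  shows
  "pa_states (mkpa R S) = to_nat ` St R S"
  "pa_delta (mkpa R S) n a = to_nat (Dd (from_nat n) a)"
  "pa_gamma (mkpa R S) n r s = to_nat (Gg R (from_nat n) (from_nat r) (from_nat s))"
  "pa_final (mkpa R S) = {to_nat (Some [] :: 'a st)}"
  "pa_bot (mkpa R S) = to_nat (None :: 'a st)"
  "pa_top (mkpa R S) = to_nat (Some [] :: 'a st)"
  by (simp_all add: mkpa_def)

lemma Some_nil_St: "Some [] \<in> St R S" by (simp add: St_def Reach_nil)
lemma None_St: "None \<in> St R S" by (simp add: St_def)

lemma mkpa_is_pa:
  fixes R :: "(nat \<times> ('a::finite, nat) gterm) set"
  shows "is_pa (mkpa R S)"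
  unfolding is_pa_def mkpa_simps
proof (intro conjI ballI allI)
  show "{to_nat (Some [] :: 'a st)} \<subseteq> to_nat ` St R S" using Some_nil_St by blast
  show "to_nat (None :: 'a st) \<in> to_nat ` St R S" using None_St by blast
  show "to_nat (Some [] :: 'a st) \<in> to_nat ` St R S" using Some_nil_St by blast
  show "to_nat (None :: 'a st) \<notin> {to_nat (Some [] :: 'a st)}" by simp
  show "to_nat (Some [] :: 'a st) \<in> {to_nat (Some [] :: 'a st)}" by simp
  fix q and a :: 'a assume "q \<in> to_nat ` St R S"
  then obtain x where "x \<in> St R S" "q = to_nat x" by blast
  thus "to_nat (Dd (from_nat q) a) \<in> to_nat ` St R S" using Dd_St[of x R S a] by simp
next
  fix q r s assume "q \<in> to_nat ` St R S"
  then obtain x where "x \<in> St R S" "q = to_nat x" by blast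
  thus "to_nat (Gg R (from_nat q) (from_nat r) (from_nat s)) \<in> to_nat ` St R S" using Gg_St[of x R S "from_nat r" "from_nat s"] by simp
next
  fix a :: 'a show "to_nat (Dd (from_nat (to_nat (None :: 'a st))) a) = to_nat (None :: 'a st)" by simp
  show "to_nat (Dd (from_nat (to_nat (Some [] :: 'a st))) a) = to_nat (None :: 'a st)" by simp
next
  fix r s
  show "to_nat (Gg R (from_nat (to_nat (None :: 'a st))) (from_nat r) (from_nat s)) = to_nat (None :: 'a st)" by simp
  show "to_nat (Gg R (from_nat (to_nat (Some [] :: 'a st))) (from_nat r) (from_nat s)) = to_nat (None :: 'a st)" by simp
qed

fun lang :: "(nat \<times> ('a, nat) gterm) set \<Rightarrow> ('a, nat) gterm list \<Rightarrow> 'a pomset set" where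
  "lang R [] = {pom_one}"
| "lang R (t # ts) = {pom_seq A B | A B. gen R t A \<and> B \<in> lang R ts}"

lemma lang_single: "U \<in> lang R [t] \<longleftrightarrow> gen R t U"
  by (auto simp: seq_one_right)

lemma Dd_Some: "Dd x a = Some ts' \<Longrightarrow> x = Some (Term a # ts')"
  by (cases "(x, a)" rule: Dd.cases) (auto split: if_splits)

lemma Gg_Some: "Gg R x r s = Some ts' \<Longrightarrow>
   (\<exists>rest. x = Some (Eps # rest) \<and> r = Some [] \<and> s = Some [] \<and> ts' = rest) \<or>
   (\<exists>t1 t2 rest. x = Some (GSeq t1 t2 # rest) \<and> r = Some [] \<and> s = Some [] \<and> ts' = t1 # t2 # rest) \<or>
   (\<exists>X t rest. x = Some (NT X # rest) \<and> (X, t) \<in> R \<and> r = Some [t] \<and> s = Some [] \<and> ts' = rest) \<or>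
   (\<exists>t1 t2 rest. x = Some (GPar t1 t2 # rest) \<and> r = Some [t1] \<and> s = Some [t2] \<and> ts' = rest)"
  by (cases "(R, x, r, s)" rule: Gg.cases) (auto split: if_splits)

lemma Gg_None: "Gg R None r s = None" by simp

lemma sound:
  fixes R :: "(nat \<times> ('a::finite, nat) gterm) set"
  shows "pa_trace (mkpa R S) p U p' \<Longrightarrow>
   (from_nat p = (None :: 'a st) \<longrightarrow> from_nat p' = (None :: 'a st)) \<and>
   (\<forall>ts ts'. from_nat p = Some ts \<longrightarrow> from_nat p' = Some ts' \<longrightarrow> (\<forall>W \<in> lang R ts'. pom_seq U W \<in> lang R ts))"
proof (induction rule: pa_trace.induct)
  case (tr_one q) thus ?case by (simp add: seq_one_left)
next
  case (tr_prim q a)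
  show ?case
  proof (intro conjI allI impI ballI)
    assume "from_nat q = (None :: 'a st)"
    thus "from_nat (pa_delta (mkpa R S) q a) = (None :: 'a st)" by simp
  next
    fix ts ts' :: "('a, nat) gterm list" and W assume "from_nat q = Some ts" "from_nat (pa_delta (mkpa R S) q a) = Some ts'" "W \<in> lang R ts'"
    hence "Dd (Some ts) a = Some ts'" by simp
    hence "ts = Term a # ts'" by (auto dest: Dd_Some)
    thus "pom_seq (pom_prim a) W \<in> lang R ts" using \<open>W \<in> lang R ts'\<close> by (auto intro: gen_term)
  qed
next
  case (tr_seq q U q'' V q')
  show ?case
  proof (intro conjI allI impI ballI)
    assume "from_nat q = (None :: 'a st)"
    thus "from_nat q' = (None :: 'a st)" using tr_seq.IH by simp
  next
    fix ts ts' :: "('a, nat) gterm list" and W assume a: "from_nat q = Some ts" "from_nat q' = Some ts'" "W \<in> lang R ts'"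
    obtain ts'' where m: "from_nat q'' = (Some ts'' :: 'a st)"
      using tr_seq.IH(2) a(2) by (cases "from_nat q'' :: 'a st") auto
    have "pom_seq V W \<in> lang R ts''" using tr_seq.IH(2) m a by blast
    hence "pom_seq U (pom_seq V W) \<in> lang R ts" using tr_seq.IH(1) m a by blast
    thus "pom_seq (pom_seq U V) W \<in> lang R ts" by (simp add: seq_assoc)
  qed
next
  case (tr_par q r U r' s V s')
  show ?case
  proof (intro conjI allI impI ballI)
    assume "from_nat q = (None :: 'a st)"
    thus "from_nat (pa_gamma (mkpa R S) q r s) = (None :: 'a st)" by simp
  next
    fix ts ts' :: "('a, nat) gterm list" and W assume a: "from_nat q = Some ts" "from_nat (pa_gamma (mkpa R S) q r s) = Some ts'" "W \<in> lang R ts'"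
    have r': "from_nat r' = (Some [] :: 'a st)" using tr_par(3) by simp
    have s': "from_nat s' = (Some [] :: 'a st)" using tr_par(5) by simp
    obtain rs where rs: "from_nat r = (Some rs :: 'a st)"
      using tr_par.IH(1) r' by (cases "from_nat r :: 'a st") auto
    obtain ss where ss: "from_nat s = (Some ss :: 'a st)"
      using tr_par.IH(2) s' by (cases "from_nat s :: 'a st") auto
    have "pom_seq U pom_one \<in> lang R rs" using tr_par.IH(1) rs r' by simp
    hence U: "U \<in> lang R rs" by (simp add: seq_one_right)
    have "pom_seq V pom_one \<in> lang R ss" using tr_par.IH(2) ss s' by simp
    hence V: "V \<in> lang R ss" by (simp add: seq_one_right)
    have G: "Gg R (Some ts) (Some rs) (Some ss) = Some ts'" using a(2) a(1) rs ss by simp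
    from Gg_Some[OF G] show "pom_seq (pom_par U V) W \<in> lang R ts"
    proof (elim disjE exE conjE)
      fix rest assume "Some ts = Some (Eps # rest)" "Some rs = Some []" "Some ss = Some []" "ts' = rest"
      thus ?thesis using U V a(3) by (auto simp: par_one_right intro: gen_eps)
    next
      fix t1 t2 rest assume "Some ts = Some (GSeq t1 t2 # rest)" "Some rs = Some []" "Some ss = Some []" "ts' = t1 # t2 # rest"
      hence e: "ts = GSeq t1 t2 # rest" "U = pom_one" "V = pom_one" "ts' = t1 # t2 # rest" using U V by auto
      from a(3) obtain A B C where "W = pom_seq A (pom_seq B C)" "gen R t1 A" "gen R t2 B" "C \<in> lang R rest"
        unfolding e by auto
      thus ?thesis unfolding e by (auto simp: par_one_right seq_one_left seq_assoc[symmetric] intro: gen_seq)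
    next
      fix X t rest assume "Some ts = Some (NT X # rest)" "(X, t) \<in> R" "Some rs = Some [t]" "Some ss = Some []" "ts' = rest"
      hence e: "ts = NT X # rest" "gen R t U" "V = pom_one" "ts' = rest" "(X, t) \<in> R"
        using U V lang_single[of U R t] by auto
      have "gen R (NT X) U" using e(5,2) by (rule gen_nt)
      thus ?thesis using a(3) unfolding e by (auto simp: par_one_right)
    next
      fix t1 t2 rest assume "Some ts = Some (GPar t1 t2 # rest)" "Some rs = Some [t1]" "Some ss = Some [t2]" "ts' = rest"
      hence e: "ts = GPar t1 t2 # rest" "gen R t1 U" "gen R t2 V" "ts' = rest"
        using U V lang_single[of U R t1] lang_single[of V R t2] by auto
      have "gen R (GPar t1 t2) (pom_par U V)" using e(2,3) by (rule gen_par)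
      thus ?thesis using a(3) unfolding e by auto
    qed
  qed
qed


lemma trace_eq: "pa_trace A q U q' \<Longrightarrow> U = U' \<Longrightarrow> q' = q'' \<Longrightarrow> pa_trace A q U' q''" by simp

lemma st_in: fixes R :: "(nat \<times> ('a::finite, nat) gterm) set" shows "ts \<in> Reach R S \<Longrightarrow> to_nat (Some ts) \<in> pa_states (mkpa R S)"
  by (simp add: St_def)

lemma top_tr: fixes R :: "(nat \<times> ('a::finite, nat) gterm) set" shows "pa_trace (mkpa R S) (to_nat (Some [] :: 'a::finite st)) pom_one (to_nat (Some [] :: 'a st))"
  by (rule tr_one) (rule st_in[OF Reach_nil])

lemma complete:
  fixes R :: "(nat \<times> ('a::finite, nat) gterm) set"
  assumes fin: "finite R"
  shows "gen R t U \<Longrightarrow> t # rest \<in> Reach R S \<Longrightarrow>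
     pa_trace (mkpa R S) (to_nat (Some (t # rest))) U (to_nat (Some rest))"
proof (induction arbitrary: rest rule: gen.induct)
  case (gen_term a)
  have "pa_trace (mkpa R S) (to_nat (Some (Term a # rest))) (pom_prim a)
     (pa_delta (mkpa R S) (to_nat (Some (Term a # rest))) a)"
    by (rule tr_prim) (rule st_in[OF gen_term])
  thus ?case by simp
next
  case gen_eps
  have "pa_trace (mkpa R S) (to_nat (Some (Eps # rest))) (pom_par pom_one pom_one)
     (pa_gamma (mkpa R S) (to_nat (Some (Eps # rest))) (to_nat (Some [] :: 'a st)) (to_nat (Some [] :: 'a st)))"
    by (rule tr_par[OF st_in[OF gen_eps] top_tr _ top_tr]) simp_all
  thus ?case by (rule trace_eq) (simp_all add: par_one_right)
next
  case (gen_seq s A t B)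
  have r1: "s # t # rest \<in> Reach R S" using gen_seq.prems by (rule Reach_seq)
  have r2: "t # rest \<in> Reach R S" using r1 by (rule Reach_tl)
  have "pa_trace (mkpa R S) (to_nat (Some (GSeq s t # rest))) (pom_par pom_one pom_one)
     (pa_gamma (mkpa R S) (to_nat (Some (GSeq s t # rest))) (to_nat (Some [] :: 'a st)) (to_nat (Some [] :: 'a st)))"
    by (rule tr_par[OF st_in[OF gen_seq.prems] top_tr _ top_tr]) simp_all
  hence t1: "pa_trace (mkpa R S) (to_nat (Some (GSeq s t # rest))) pom_one (to_nat (Some (s # t # rest)))"
    by (rule trace_eq) (simp_all add: par_one_right)
  have t2: "pa_trace (mkpa R S) (to_nat (Some (s # t # rest))) A (to_nat (Some (t # rest)))"
    using gen_seq.IH(1)[OF r1] .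
  have t3: "pa_trace (mkpa R S) (to_nat (Some (t # rest))) B (to_nat (Some rest))"
    using gen_seq.IH(2)[OF r2] .
  have "pa_trace (mkpa R S) (to_nat (Some (GSeq s t # rest))) (pom_seq pom_one (pom_seq A B)) (to_nat (Some rest))"
    by (rule tr_seq[OF t1 tr_seq[OF t2 t3]])
  thus ?case by (simp add: seq_one_left)
next
  case (gen_par s A t B)
  have r: "[s] \<in> Reach R S" "[t] \<in> Reach R S" using Reach_par[OF fin gen_par.prems] by auto
  have "pa_trace (mkpa R S) (to_nat (Some (GPar s t # rest))) (pom_par A B)
     (pa_gamma (mkpa R S) (to_nat (Some (GPar s t # rest))) (to_nat (Some [s])) (to_nat (Some [t])))"
    by (rule tr_par[OF st_in[OF gen_par.prems] gen_par.IH(1)[OF r(1)] _ gen_par.IH(2)[OF r(2)]]) simp_all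
  thus ?case by simp
next
  case (gen_nt X t U)
  have r: "[t] \<in> Reach R S" using Reach_single[OF fin TT_rule[OF gen_nt(1)]] .
  have "pa_trace (mkpa R S) (to_nat (Some (NT X # rest))) (pom_par U pom_one)
     (pa_gamma (mkpa R S) (to_nat (Some (NT X # rest))) (to_nat (Some [t])) (to_nat (Some [] :: 'a st)))"
    by (rule tr_par[OF st_in[OF gen_nt.prems] gen_nt.IH[OF r] _ top_tr]) simp_all
  thus ?case using gen_nt(1) by (simp add: par_one_right)
qed

lemma cf_to_pa:
  fixes L :: "'a::finite pomset set"
  assumes "context_free L"
  shows "\<exists>A q. finite_pa A \<and> q \<in> pa_states A \<and> L = pa_lang A q"
proof -
  obtain GG where GG: "is_grammar GG" "L = grammar_lang GG"
    using assms unfolding context_free_def by blast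
  obtain \<Gamma> S R where GGe: "GG = (\<Gamma>, S, R)" by (cases GG) blast
  have G: "is_grammar (\<Gamma>, S, R)" "L = grammar_lang (\<Gamma>, S, R)" using GG unfolding GGe by simp_all
  have fin: "finite R" using G(1) by (simp add: is_grammar_def)
  let ?A = "mkpa R S :: 'a pa"
  let ?q = "to_nat (Some [NT S] :: 'a st)"
  have rS: "[NT S] \<in> Reach R S" by (rule Reach_single[OF fin TT_S])
  have "finite_pa ?A" unfolding finite_pa_def
    using mkpa_is_pa[of R S] Reach_fin[OF fin] by (simp add: St_def)
  moreover have "?q \<in> pa_states ?A" by (rule st_in[OF rS])
  moreover have "L = pa_lang ?A ?q"
  proof -
    have "U \<in> pa_lang ?A ?q \<longleftrightarrow> gen R (NT S) U" for U
    proof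
      assume "U \<in> pa_lang ?A ?q"
      hence tr: "pa_trace ?A ?q U (to_nat (Some [] :: 'a st))" by (simp add: pa_lang_def)
      have "pom_seq U pom_one \<in> lang R [NT S]"
        using sound[OF tr] by simp
      hence "gen R (NT S) (pom_seq U pom_one)" by (simp only: lang_single)
      thus "gen R (NT S) U" by (simp only: seq_one_right)
    next
      assume "gen R (NT S) U"
      hence "pa_trace ?A ?q U (to_nat (Some [] :: 'a st))" using complete[OF fin _ rS] by blast
      thus "U \<in> pa_lang ?A ?q" by (simp add: pa_lang_def)
    qed
    thus ?thesis using G(2) by (auto simp: grammar_lang_gen)
  qed
  ultimately show ?thesis by blast
qed

theorem mainTheorem3:
  fixes U :: "('a::finite) pomset set"
  assumes "U \<subseteq> sp_pomsets"
  shows "(\<exists>A q. finite_pa A \<and> q \<in> pa_states A \<and> U = pa_lang A q) \<longleftrightarrow> context_free U"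
proof
  assume "\<exists>A q. finite_pa A \<and> q \<in> pa_states A \<and> U = pa_lang A q"
  then obtain A q where "finite_pa A" "q \<in> pa_states A" "U = pa_lang A q" by blast
  thus "context_free U" using pa_to_cf by blast
next
  assume "context_free U"
  thus "\<exists>A q. finite_pa A \<and> q \<in> pa_states A \<and> U = pa_lang A q" by (rule cf_to_pa)
qed


end
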